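(* Let $1\le p<\infty$, $0\le\lambda_1,\lambda_2<n$ with $0<\lambda_1+\lambda_2<n$, let $w$ be a weight on $\mathbb{R}^n$ and $\varphi(B)=r_B^{\lambda_1}w(B)^{\lambda_2/n}$. Suppose $w\in A(\mathcal M^{p}(\varphi))$. Then: (a) for all balls $B_1\subset B_2$, $$\frac{w(B_1)}{w(B_2)}\le C\left(\frac{|B_1|}{|B_2|}\right)^{\frac{\lambda_1}{n-\lambda_2}},$$ with $C$ independent of the balls; that is, $w\in RD_{\lambda_1/(n-\lambda_2)}$; (b) $w\in A_{\frac{np+\lambda_1}{n-\lambda_2}}$.
   Context: A weight is a nonnegative locally integrable function; $w(E)=\int_Ew$; $r_B$ is the radius of the ball $B$. $\mathcal M^{p}(\varphi,w)$: measurable $f$ with $\|f\|_{\mathcal M^{p}(\varphi,w)}:=\sup_B\big(\varphi(B)^{-1}\int_B|f|^pw\big)^{1/p}<\infty$, over all balls. Köthe dual: $\|g\|_{X'}:=\sup\{\int|fg|:\|f\|_X\le1\}$. $w\in A(\mathcal M^{p}(\varphi))$ means $\sup_B\|\chi_B\|_{\mathcal M^{p}(\varphi,w)}\|\chi_B\|_{\mathcal M^{p}(\varphi,w)'}/|B|<\infty$ over all balls. $RD_\delta$: weights with $w(B_1)/w(B_2)\le C(|B_1|/|B_2|)^\delta$ for balls $B_1\subset B_2$. $A_r$ ($r>1$) is the usual Muckenhoupt class: $\sup_B (|B|^{-1}\int_Bw)(|B|^{-1}\int_Bw^{1-r'})^{r-1}<\infty$. *)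

theory Defs
  imports "HOL-Analysis.Analysis"
begin

definition is_weight :: "('a::euclidean_space \<Rightarrow> real) \<Rightarrow> bool" where
  "is_weight w \<longleftrightarrow> (\<forall>x. 0 \<le> w x) \<and> w \<in> borel_measurable lebesgue \<and>
     (\<forall>K. compact K \<longrightarrow> set_integrable lebesgue K w)"

text \<open>w(E) = integral of w over E (finite for balls, by local integrability).\<close>
definition wmeas :: "('a::euclidean_space \<Rightarrow> real) \<Rightarrow> 'a set \<Rightarrow> real" where
  "wmeas w E = enn2real (\<integral>\<^sup>+ y \<in> E. ennreal (w y) \<partial>lebesgue)"

definition enn_rpow :: "ennreal \<Rightarrow> real \<Rightarrow> ennreal" where
  "enn_rpow x a = (if x = top then top else ennreal (enn2real x powr a))"

definition phi_w :: "real \<Rightarrow> real \<Rightarrow> ('a::euclidean_space \<Rightarrow> real) \<Rightarrow> 'a \<Rightarrow> real \<Rightarrow> real" where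
  "phi_w l1 l2 w x r = r powr l1 *
     (if l2 = 0 then 1 else wmeas w (ball x r) powr (l2 / real DIM('a)))"

definition morrey_norm :: "real \<Rightarrow> ('a::euclidean_space \<Rightarrow> real \<Rightarrow> real) \<Rightarrow> ('a \<Rightarrow> real)
    \<Rightarrow> ('a \<Rightarrow> real) \<Rightarrow> ennreal" where
  "morrey_norm p phi w f = enn_rpow
     (SUP xr \<in> {xr. snd xr > 0}.
        (\<integral>\<^sup>+ y \<in> ball (fst xr) (snd xr). ennreal (\<bar>f y\<bar> powr p * w y) \<partial>lebesgue)
          / ennreal (phi (fst xr) (snd xr)))
     (1 / p)"

definition kothe_norm :: "(('a::euclidean_space \<Rightarrow> real) \<Rightarrow> ennreal) \<Rightarrow> ('a \<Rightarrow> real) \<Rightarrow> ennreal" where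
  "kothe_norm N g = (SUP f \<in> {f. f \<in> borel_measurable lebesgue \<and> N f \<le> 1}.
      \<integral>\<^sup>+ y. ennreal \<bar>f y * g y\<bar> \<partial>lebesgue)"

definition A_morrey :: "real \<Rightarrow> ('a::euclidean_space \<Rightarrow> real \<Rightarrow> real) \<Rightarrow> ('a \<Rightarrow> real) \<Rightarrow> bool" where
  "A_morrey p phi w \<longleftrightarrow> (\<exists>C::real. \<forall>x r. r > 0 \<longrightarrow>
      morrey_norm p phi w (indicator (ball x r))
        * kothe_norm (morrey_norm p phi w) (indicator (ball x r))
      \<le> ennreal C * emeasure lebesgue (ball x r))"

definition RD :: "real \<Rightarrow> ('a::euclidean_space \<Rightarrow> real) \<Rightarrow> bool" where
  "RD \<delta> w \<longleftrightarrow> (\<exists>C::real. \<forall>x1 r1 x2 r2. 0 < r1 \<longrightarrow> 0 < r2 \<longrightarrow> ball x1 r1 \<subseteq> ball x2 r2 \<longrightarrow>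
      wmeas w (ball x1 r1) / wmeas w (ball x2 r2)
        \<le> C * (measure lebesgue (ball x1 r1) / measure lebesgue (ball x2 r2)) powr \<delta>)"

text \<open>Muckenhoupt class A_r (r > 1), with r' = r/(r-1); w^(1-r') is +infinity where w = 0.\<close>
definition muckenhoupt :: "real \<Rightarrow> ('a::euclidean_space \<Rightarrow> real) \<Rightarrow> bool" where
  "muckenhoupt r w \<longleftrightarrow> (\<exists>C::real. \<forall>x s. s > 0 \<longrightarrow>
      (\<integral>\<^sup>+ y \<in> ball x s. ennreal (w y) \<partial>lebesgue) / emeasure lebesgue (ball x s)
      * enn_rpow ((\<integral>\<^sup>+ y \<in> ball x s.
            (if w y = 0 then top else ennreal (w y powr (1 - r / (r - 1)))) \<partial>lebesgue)
           / emeasure lebesgue (ball x s)) (r - 1)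
      \<le> ennreal C)"

end

theory Submission imports Defs begin

lemma emeasure_lebesgue_ball:
  "emeasure lebesgue (ball (x::'a::euclidean_space) r) = ennreal (unit_ball_vol (real DIM('a)) * r ^ DIM('a))" if "r \<ge> 0"
  using emeasure_ball[OF that, of x] by simp

lemma measure_lebesgue_ball:
  "measure lebesgue (ball (x::'a::euclidean_space) r) = unit_ball_vol (real DIM('a)) * r ^ DIM('a)" if "r \<ge> 0"
  using content_ball[OF that, of x] by simp

lemma young3:
  fixes x y z a b c :: real
  assumes "0 \<le> a" "0 \<le> b" "0 \<le> c" "a + b + c = 1" "x > 0" "y > 0" "z > 0"
  shows "x powr a * y powr b * z powr c \<le> a*x + b*y + c*z"
proof (cases "a + b = 0")
  case True
  then have "a = 0" "b = 0" using assms by auto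
  then show ?thesis using assms by simp
next
  case False
  define s where "s = a + b"
  have s: "s > 0" using False assms s_def by auto
  define m where "m = (a/s)*x + (b/s)*y"
  have m: "m > 0" unfolding m_def using assms s False
    by (smt (verit, best) divide_nonneg_pos mult_nonneg_nonneg mult_pos_pos zero_less_divide_iff)
  have "x powr (a/s) * y powr (b/s) \<le> m"
    unfolding m_def using assms s Youngs_inequality_0[of "a/s" "b/s" x y]
    by (simp add: s_def add_divide_distrib[symmetric])
  then have "(x powr (a/s) * y powr (b/s)) powr s \<le> m powr s"
    by (intro powr_mono2) (use s in auto)
  also have "(x powr (a/s) * y powr (b/s)) powr s = x powr a * y powr b"
    using assms s by (simp add: powr_mult powr_powr)
  finally have 1: "x powr a * y powr b \<le> m powr s" .
  have "m powr s * z powr c \<le> s * m + c * z"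
    using Youngs_inequality_0[of s c m z] assms s m by (simp add: s_def)
  also have "s * m = a*x + b*y" unfolding m_def using s by (simp add: field_simps)
  finally have 2: "m powr s * z powr c \<le> a*x + b*y + c*z" by simp
  have "x powr a * y powr b * z powr c \<le> m powr s * z powr c"
    using 1 by (intro mult_right_mono) auto
  with 2 show ?thesis by simp
qed

lemma hold3:
  fixes M :: "'b measure" and u v :: "'b \<Rightarrow> real"
  assumes S: "S \<in> sets M" and um: "u \<in> borel_measurable M" and vm: "v \<in> borel_measurable M"
    and up: "\<And>x. x \<in> S \<Longrightarrow> u x > 0" and vp: "\<And>x. x \<in> S \<Longrightarrow> v x > 0"
    and ab: "0 \<le> \<alpha>" "0 \<le> \<beta>" "0 \<le> \<gamma>" "\<alpha> + \<beta> + \<gamma> = 1"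
    and pos: "a > 0" "b > 0" "c > 0"
    and iu: "(\<integral>\<^sup>+x. ennreal (u x) * indicator S x \<partial>M) \<le> ennreal a"
    and iv: "(\<integral>\<^sup>+x. ennreal (v x) * indicator S x \<partial>M) \<le> ennreal b"
    and mS: "emeasure M S \<le> ennreal c"
  shows "(\<integral>\<^sup>+x. ennreal (u x powr \<alpha> * v x powr \<beta>) * indicator S x \<partial>M)
     \<le> ennreal (a powr \<alpha> * b powr \<beta> * c powr \<gamma>)"
proof -
  define K where "K = a powr \<alpha> * b powr \<beta> * c powr \<gamma>"
  have K: "K > 0" unfolding K_def using pos by simp
  have pw: "ennreal (u x powr \<alpha> * v x powr \<beta>) * indicator S x \<le>
     ennreal K * (ennreal (\<alpha>/a) * (ennreal (u x) * indicator S x) + ennreal (\<beta>/b) * (ennreal (v x) * indicator S x)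
       + ennreal (\<gamma>/c) * indicator S x)" for x
  proof (cases "x \<in> S")
    case True
    have "u x powr \<alpha> * v x powr \<beta> = K * ((u x / a) powr \<alpha> * (v x / b) powr \<beta> * (1/c) powr \<gamma>)"
      unfolding K_def using pos up[OF True] vp[OF True]
      by (simp add: powr_divide)
    also have "\<dots> \<le> K * (\<alpha> * (u x / a) + \<beta> * (v x / b) + \<gamma> * (1/c))"
      using young3[of \<alpha> \<beta> \<gamma> "u x / a" "v x / b" "1/c"] ab pos up[OF True] vp[OF True] K
      by (intro mult_left_mono) auto
    finally have le: "u x powr \<alpha> * v x powr \<beta> \<le> K * (\<alpha>/a * u x + \<beta>/b * v x + \<gamma>/c)" by simp
    have "ennreal (u x powr \<alpha> * v x powr \<beta>) \<le> ennreal (K * (\<alpha>/a * u x + \<beta>/b * v x + \<gamma>/c))"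
      using le by (rule ennreal_leI)
    also have "\<dots> = ennreal K * (ennreal (\<alpha>/a) * ennreal (u x) + ennreal (\<beta>/b) * ennreal (v x) + ennreal (\<gamma>/c))"
    proof -
      have nn: "0 \<le> \<alpha>/a * u x" "0 \<le> \<beta>/b * v x" "0 \<le> \<gamma>/c"
        using ab pos up[OF True] vp[OF True] by auto
      have "ennreal (K * (\<alpha>/a * u x + \<beta>/b * v x + \<gamma>/c)) = ennreal K * ennreal (\<alpha>/a * u x + \<beta>/b * v x + \<gamma>/c)"
        using K nn by (intro ennreal_mult) auto
      also have "ennreal (\<alpha>/a * u x + \<beta>/b * v x + \<gamma>/c) = ennreal (\<alpha>/a * u x) + ennreal (\<beta>/b * v x) + ennreal (\<gamma>/c)"
        using nn by (simp add: ennreal_plus)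
      also have "ennreal (\<alpha>/a * u x) = ennreal (\<alpha>/a) * ennreal (u x)"
        using ab pos up[OF True] by (intro ennreal_mult) auto
      also have "ennreal (\<beta>/b * v x) = ennreal (\<beta>/b) * ennreal (v x)"
        using ab pos vp[OF True] by (intro ennreal_mult) auto
      finally show ?thesis .
    qed
    finally show ?thesis using True by simp
  qed simp
  have "(\<integral>\<^sup>+x. ennreal (u x powr \<alpha> * v x powr \<beta>) * indicator S x \<partial>M) \<le>
     (\<integral>\<^sup>+x. ennreal K * (ennreal (\<alpha>/a) * (ennreal (u x) * indicator S x) + ennreal (\<beta>/b) * (ennreal (v x) * indicator S x)
       + ennreal (\<gamma>/c) * indicator S x) \<partial>M)"
    by (intro nn_integral_mono pw)
  also have "\<dots> = ennreal K * (ennreal (\<alpha>/a) * (\<integral>\<^sup>+x. ennreal (u x) * indicator S x \<partial>M)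
      + ennreal (\<beta>/b) * (\<integral>\<^sup>+x. ennreal (v x) * indicator S x \<partial>M) + ennreal (\<gamma>/c) * emeasure M S)"
    using S um vm by (simp add: nn_integral_cmult nn_integral_add)
  also have "\<dots> \<le> ennreal K * (ennreal (\<alpha>/a) * ennreal a + ennreal (\<beta>/b) * ennreal b + ennreal (\<gamma>/c) * ennreal c)"
    by (intro mult_left_mono add_mono iu iv mS) auto
  also have "\<dots> = ennreal K"
  proof -
    have "ennreal (\<alpha>/a) * ennreal a = ennreal \<alpha>" using pos ab by (simp add: ennreal_mult[symmetric])
    moreover have "ennreal (\<beta>/b) * ennreal b = ennreal \<beta>" using pos ab by (simp add: ennreal_mult[symmetric])
    moreover have "ennreal (\<gamma>/c) * ennreal c = ennreal \<gamma>" using pos ab by (simp add: ennreal_mult[symmetric])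
    moreover have "ennreal \<alpha> + ennreal \<beta> + ennreal \<gamma> = 1" using ab by (simp add: ennreal_plus[symmetric] del: ennreal_plus)
    ultimately show ?thesis by simp
  qed
  finally show ?thesis unfolding K_def .
qed


lemma enn_rpow_le1:
  assumes "X \<le> 1" "0 \<le> a" shows "enn_rpow X a \<le> 1"
proof -
  have "X < top" using assms(1) ennreal_one_less_top by (rule order.strict_trans1)
  then have ntop: "X \<noteq> top" by simp
  have "enn2real X \<le> 1" using assms(1) enn2real_leI[of 1 X] by simp
  then have "enn2real X powr a \<le> 1"
    using assms(2) powr_mono2[of a "enn2real X" 1] by simp
  then have "ennreal (enn2real X powr a) \<le> 1" by (simp add: ennreal_le_1)
  then show ?thesis using ntop unfolding enn_rpow_def by simp
qed

lemma ball_leb[measurable]: "ball (x::'a::euclidean_space) r \<in> sets lebesgue"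
  by simp
lemma lev_leb: fixes w :: "'a::euclidean_space \<Rightarrow> real"
  assumes [measurable]: "w \<in> borel_measurable lebesgue" shows "{y. w y = c} \<in> sets lebesgue" "{y. c \<le> w y} \<in> sets lebesgue"
   "{y. 0 < w y} \<in> sets lebesgue"
proof -
  have "{y \<in> space lebesgue. w y = c} \<in> sets lebesgue" "{y \<in> space lebesgue. c \<le> w y} \<in> sets lebesgue"
     "{y \<in> space lebesgue. 0 < w y} \<in> sets lebesgue" by measurable
  then show "{y. w y = c} \<in> sets lebesgue" "{y. c \<le> w y} \<in> sets lebesgue"
   "{y. 0 < w y} \<in> sets lebesgue" by auto
qed

lemma exp_alg:
  fixes N p l1 l2 :: real
  assumes N: "N > 0" and D: "N * p + l1 + l2 - N \<noteq> 0"
  shows "l2 / N - ((N - l2) / (N * p + l1 + l2 - N)) * ((N - l1 - l2) / N) = 1 - ((N - l2) / (N * p + l1 + l2 - N)) * p"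
proof -
  define D where "D = N * p + l1 + l2 - N"
  have D0: "D \<noteq> 0" using D D_def by simp
  have "l2 / N - ((N - l2) / D) * ((N - l1 - l2) / N) = (l2 * D - (N - l2) * (N - l1 - l2)) / (N * D)"
    using N D0 by (simp add: field_simps)
  also have "l2 * D - (N - l2) * (N - l1 - l2) = N * D - N * p * (N - l2)"
    unfolding D_def by (simp add: algebra_simps)
  also have "(N * D - N * p * (N - l2)) / (N * D) = 1 - ((N - l2) / D) * p"
    using N D0 by (simp add: field_simps)
  finally show ?thesis unfolding D_def .
qed

lemma keylin:
  fixes N p l1 l2 A R V Om c q rr :: real
  assumes N: "N > 0" and Nl: "N - l2 > 0" and p0: "p > 0"
    and qd: "q = N * p / (N - l2)" and rd: "rr = (N * p + l1) / (N - l2)"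
    and H: "(1/p) * (A - (l1 * R + (l2/N) * A)) + (-1/p) * ((l1/N) * Om + ((N-l1-l2)/N) * V) + V \<le> c + (Om + N * R)"
  shows "A + (rr - 1) * V \<le> q * c + (q + q * (l1/N) / p - rr) * Om + rr * (Om + N * R)"
proof -
  define kA where "kA = (1/p) * (1 - l2/N)"
  define kR where "kR = l1/p + N"
  define kV where "kV = 1 - (1/p) * ((N - l1 - l2)/N)"
  define kO where "kO = (1/p) * (l1/N) + 1"
  have e1: "(1/p) * (A - (l1 * R + (l2/N) * A)) + (-1/p) * ((l1/N) * Om + ((N-l1-l2)/N) * V) + V - (c + (Om + N * R))
     = kA * A - kR * R + kV * V - kO * Om - c"
    unfolding kA_def kR_def kV_def kO_def using N p0 by (simp add: field_simps)
  have H': "kA * A - kR * R + kV * V - kO * Om - c \<le> 0" using H e1 by linarith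
  have q: "q > 0" unfolding qd using N Nl p0 by simp
  have le: "q * (kA * A - kR * R + kV * V - kO * Om - c) \<le> 0" using H' q by (simp add: mult_nonneg_nonpos)
  have e2: "q * (kA * A - kR * R + kV * V - kO * Om - c) = (q * kA) * A - (q * kR) * R + (q * kV) * V - (q * kO) * Om - q * c"
    by (simp add: algebra_simps)
  have cA: "q * kA = 1" unfolding qd kA_def using N Nl p0 by (simp add: field_simps)
  have cR: "q * kR = rr * N" unfolding qd kR_def rd using N Nl p0 by (simp add: field_simps)
  have cV: "q * kV = rr - 1" unfolding qd kV_def rd using N Nl p0 by (simp add: field_simps)
  have cO: "q * kO = q + q * (l1/N) / p" unfolding kO_def by (simp add: algebra_simps)
  have e3: "q * (kA * A - kR * R + kV * V - kO * Om - c) = A - (rr * N) * R + (rr - 1) * V - (q + q * (l1/N) / p) * Om - q * c"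
    unfolding e2 cA cR cV cO by simp
  have e4: "q * c + (q + q * (l1/N) / p - rr) * Om + rr * (Om + N * R) - (A + (rr - 1) * V)
     = - (A - (rr * N) * R + (rr - 1) * V - (q + q * (l1/N) / p) * Om - q * c)"
    by (simp add: algebra_simps)
  show ?thesis using le e3 e4 by linarith
qed

lemma alg_b:
  fixes N p l1 l2 wB r v om C :: real
  assumes N: "N > 0" and p: "p \<ge> 1" and l: "l1 \<ge> 0" "l2 \<ge> 0" "l1 + l2 < N"
    and pos: "wB > 0" "r > 0" "v > 0" "om > 0" "C > 0"
    and h: "(wB / (r powr l1 * wB powr (l2/N))) powr (1/p) * ((om powr (l1/N) * v powr ((N-l1-l2)/N)) powr (-1/p) * v)
       \<le> C * (om * r powr N)"
  shows "wB * v powr ((N * p + l1) / (N - l2) - 1) \<le>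
     (C powr (N * p / (N - l2)) * om powr (N * p / (N - l2) + (N * p / (N - l2)) * (l1/N) / p - (N * p + l1) / (N - l2)))
       * (om * r powr N) powr ((N * p + l1) / (N - l2))"
proof -
  define q where "q = N * p / (N - l2)"
  define rr where "rr = (N * p + l1) / (N - l2)"
  have Nl: "N - l2 > 0" using l by linarith
  have q: "q > 0" unfolding q_def using N p Nl by simp
  have p0: "p > 0" using p by simp
  let ?A = "ln wB" let ?R = "ln r" let ?V = "ln v" let ?O = "ln om" let ?c = "ln C"
  have hl: "ln ((wB / (r powr l1 * wB powr (l2/N))) powr (1/p) * ((om powr (l1/N) * v powr ((N-l1-l2)/N)) powr (-1/p) * v))
      = (1/p) * (?A - (l1 * ?R + (l2/N) * ?A)) + (-1/p) * ((l1/N) * ?O + ((N-l1-l2)/N) * ?V) + ?V"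
    using pos by (simp add: ln_mult ln_div)
  have hr: "ln (C * (om * r powr N)) = ?c + (?O + N * ?R)" using pos by (simp add: ln_mult)
  have hpos: "0 < (wB / (r powr l1 * wB powr (l2/N))) powr (1/p) * ((om powr (l1/N) * v powr ((N-l1-l2)/N)) powr (-1/p) * v)"
    using pos by simp
  have H: "(1/p) * (?A - (l1 * ?R + (l2/N) * ?A)) + (-1/p) * ((l1/N) * ?O + ((N-l1-l2)/N) * ?V) + ?V \<le> ?c + (?O + N * ?R)"
    using h hpos pos unfolding hl[symmetric] hr[symmetric] by (subst ln_le_cancel_iff) auto
  have gl: "ln (wB * v powr (rr - 1)) = ?A + (rr - 1) * ?V" using pos by (simp add: ln_mult)
  have gr: "ln ((C powr q * om powr (q + q * (l1/N) / p - rr)) * (om * r powr N) powr rr)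
      = q * ?c + (q + q * (l1/N) / p - rr) * ?O + rr * (?O + N * ?R)" using pos by (simp add: ln_mult)
  have "?A + (rr - 1) * ?V \<le> q * ?c + (q + q * (l1/N) / p - rr) * ?O + rr * (?O + N * ?R)"
    by (rule keylin[OF N Nl p0 q_def rr_def H])
  then have "ln (wB * v powr (rr - 1)) \<le> ln ((C powr q * om powr (q + q * (l1/N) / p - rr)) * (om * r powr N) powr rr)"
    unfolding gl gr .
  then have "wB * v powr (rr - 1) \<le> (C powr q * om powr (q + q * (l1/N) / p - rr)) * (om * r powr N) powr rr"
    using pos by (subst (asm) ln_le_cancel_iff) auto
  then show ?thesis unfolding q_def rr_def .
qed

lemma keylin_a:
  fixes N p l1 l2 A1 A2 R1 R2 V Om c q rr L2 :: real
  assumes N: "N > 0" and Nl: "N - l2 > 0" and p0: "p > 0"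
    and qd: "q = N * p / (N - l2)" and rd: "rr = (N * p + l1) / (N - l2)" and rr1: "rr > 1"
    and H: "(1/p) * (A1 - (l1 * R1 + (l2/N) * A1)) + (-1/p) * ((l1/N) * Om + ((N-l1-l2)/N) * V) + V \<le> c + (Om + N * R2)"
    and Hh: "Om + N * R2 - L2 \<le> (1/rr) * A2 + (1 - 1/rr) * V"
  shows "A1 - A2 \<le> q * c + (q + q * (l1/N) / p - rr) * Om + rr * L2 + (l1 / (N - l2)) * (N * R1 - N * R2)"
proof -
  define kA where "kA = (1/p) * (1 - l2/N)"
  define kV where "kV = 1 - (1/p) * ((N - l1 - l2)/N)"
  define kO where "kO = (1/p) * (l1/N) + 1"
  have e1: "(1/p) * (A1 - (l1 * R1 + (l2/N) * A1)) + (-1/p) * ((l1/N) * Om + ((N-l1-l2)/N) * V) + V - (c + (Om + N * R2))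
     = kA * A1 - (l1/p) * R1 + kV * V - kO * Om - N * R2 - c"
    unfolding kA_def kV_def kO_def using N p0 by (simp add: field_simps)
  have H': "kA * A1 - (l1/p) * R1 + kV * V - kO * Om - N * R2 - c \<le> 0" using H e1 by linarith
  have q: "q > 0" unfolding qd using N Nl p0 by simp
  have le: "q * (kA * A1 - (l1/p) * R1 + kV * V - kO * Om - N * R2 - c) \<le> 0" using H' q by (simp add: mult_nonneg_nonpos)
  have e2: "q * (kA * A1 - (l1/p) * R1 + kV * V - kO * Om - N * R2 - c) = (q * kA) * A1 - (q * (l1/p)) * R1 + (q * kV) * V - (q * kO) * Om - (q * N) * R2 - q * c"
    by (simp add: algebra_simps)
  have cA: "q * kA = 1" unfolding qd kA_def using N Nl p0 by (simp add: field_simps)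
  have cR: "q * (l1/p) = (l1 / (N - l2)) * N" unfolding qd using N Nl p0 by (simp add: field_simps)
  have cN0: "rr - l1 / (N - l2) = q" unfolding qd rd by (simp add: diff_divide_distrib[symmetric])
  have cN: "q * N = rr * N - (l1 / (N - l2)) * N" unfolding cN0[symmetric] by (simp add: algebra_simps)
  have cV: "q * kV = rr - 1" unfolding qd kV_def rd using N Nl p0 by (simp add: field_simps)
  have cO: "q * kO = q + q * (l1/N) / p" unfolding kO_def by (simp add: algebra_simps)
  have e3: "q * (kA * A1 - (l1/p) * R1 + kV * V - kO * Om - N * R2 - c) = A1 - ((l1 / (N - l2)) * N) * R1 + (rr - 1) * V - (q + q * (l1/N) / p) * Om - (rr * N - (l1 / (N - l2)) * N) * R2 - q * c"
    unfolding e2 cA cR cV cO cN by simp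
  have le2: "rr * (Om + N * R2 - L2) \<le> rr * ((1/rr) * A2 + (1 - 1/rr) * V)"
    using Hh rr1 by (intro mult_left_mono) auto
  have e5: "rr * ((1/rr) * A2 + (1 - 1/rr) * V) = A2 + (rr - 1) * V" using rr1 by (simp add: field_simps)
  define a where "a = (l1 / (N - l2)) * N"
  define b where "b = rr * N"
  define g where "g = q + q * (l1/N) / p"
  define X where "X = (rr - 1) * V"
  have F1: "A1 - a * R1 + X - g * Om - b * R2 + a * R2 - q * c \<le> 0"
    using le unfolding e3 a_def b_def g_def X_def by (simp add: algebra_simps)
  have F2: "rr * Om + b * R2 - rr * L2 \<le> A2 + X"
    using le2 unfolding e5 b_def X_def by (simp add: algebra_simps)
  have G: "q * c + (q + q * (l1/N) / p - rr) * Om + rr * L2 + (l1 / (N - l2)) * (N * R1 - N * R2)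
     = q * c + g * Om - rr * Om + rr * L2 + a * R1 - a * R2"
    unfolding a_def g_def by (simp add: algebra_simps)
  show ?thesis unfolding G using F1 F2 by linarith
qed
lemma alg_a:
  fixes N p l1 l2 w1 w2 r1 r2 v om C :: real
  assumes N: "N > 0" and p: "p \<ge> 1" and l: "l1 \<ge> 0" "l2 \<ge> 0" "l1 + l2 < N" "0 < l1 + l2"
    and pos: "w1 > 0" "w2 > 0" "r1 > 0" "r2 > 0" "v > 0" "om > 0" "C > 0"
    and h: "(w1 / (r1 powr l1 * w1 powr (l2/N))) powr (1/p) * ((om powr (l1/N) * v powr ((N-l1-l2)/N)) powr (-1/p) * v)
       \<le> C * (om * r2 powr N)"
    and hh: "om * r2 powr N / 2 \<le> w2 powr (1 / ((N * p + l1) / (N - l2))) * v powr (1 - 1 / ((N * p + l1) / (N - l2)))"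
  shows "w1 / w2 \<le> (C powr (N * p / (N - l2)) * om powr (N * p / (N - l2) + (N * p / (N - l2)) * (l1/N) / p - (N * p + l1) / (N - l2))
      * 2 powr ((N * p + l1) / (N - l2))) * ((om * r1 powr N) / (om * r2 powr N)) powr (l1 / (N - l2))"
proof -
  define q where "q = N * p / (N - l2)"
  define rr where "rr = (N * p + l1) / (N - l2)"
  have Nl: "N - l2 > 0" using l by linarith
  have p0: "p > 0" using p by simp
  have rr1: "rr > 1"
  proof -
    have "N * p \<ge> N" using p N by simp
    then have "N * p + l1 > N - l2" using l by linarith
    then show ?thesis unfolding rr_def using Nl by simp
  qed
  have hl: "ln ((w1 / (r1 powr l1 * w1 powr (l2/N))) powr (1/p) * ((om powr (l1/N) * v powr ((N-l1-l2)/N)) powr (-1/p) * v))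
      = (1/p) * (ln w1 - (l1 * ln r1 + (l2/N) * ln w1)) + (-1/p) * ((l1/N) * ln om + ((N-l1-l2)/N) * ln v) + ln v"
    using pos by (simp add: ln_mult ln_div)
  have hr: "ln (C * (om * r2 powr N)) = ln C + (ln om + N * ln r2)" using pos by (simp add: ln_mult)
  have hpos: "0 < (w1 / (r1 powr l1 * w1 powr (l2/N))) powr (1/p) * ((om powr (l1/N) * v powr ((N-l1-l2)/N)) powr (-1/p) * v)"
    using pos by simp
  have H: "(1/p) * (ln w1 - (l1 * ln r1 + (l2/N) * ln w1)) + (-1/p) * ((l1/N) * ln om + ((N-l1-l2)/N) * ln v) + ln v \<le> ln C + (ln om + N * ln r2)"
    using h hpos pos unfolding hl[symmetric] hr[symmetric] by (subst ln_le_cancel_iff) auto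
  have hhl: "ln (om * r2 powr N / 2) = ln om + N * ln r2 - ln 2" using pos by (simp add: ln_mult ln_div)
  have hhr: "ln (w2 powr (1 / rr) * v powr (1 - 1 / rr)) = (1/rr) * ln w2 + (1 - 1/rr) * ln v" using pos by (simp add: ln_mult)
  have Hh: "ln om + N * ln r2 - ln 2 \<le> (1/rr) * ln w2 + (1 - 1/rr) * ln v"
    using hh pos unfolding hhl[symmetric] hhr[symmetric] rr_def[symmetric] by (subst ln_le_cancel_iff) auto
  have K: "ln w1 - ln w2 \<le> q * ln C + (q + q * (l1/N) / p - rr) * ln om + rr * ln 2 + (l1 / (N - l2)) * (N * ln r1 - N * ln r2)"
    by (rule keylin_a[OF N Nl p0 q_def rr_def rr1 H Hh])
  have gl: "ln (w1 / w2) = ln w1 - ln w2" using pos by (simp add: ln_div)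
  have gr: "ln ((C powr q * om powr (q + q * (l1/N) / p - rr) * 2 powr rr) * ((om * r1 powr N) / (om * r2 powr N)) powr (l1 / (N - l2)))
     = q * ln C + (q + q * (l1/N) / p - rr) * ln om + rr * ln 2 + (l1 / (N - l2)) * (N * ln r1 - N * ln r2)"
    using pos by (simp add: ln_mult ln_div)
  have "ln (w1 / w2) \<le> ln ((C powr q * om powr (q + q * (l1/N) / p - rr) * 2 powr rr) * ((om * r1 powr N) / (om * r2 powr N)) powr (l1 / (N - l2)))"
    unfolding gl gr using K .
  then have "w1 / w2 \<le> (C powr q * om powr (q + q * (l1/N) / p - rr) * 2 powr rr) * ((om * r1 powr N) / (om * r2 powr N)) powr (l1 / (N - l2))"
    using pos by (subst (asm) ln_le_cancel_iff) auto
  then show ?thesis unfolding q_def rr_def .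
qed

locale msetting =
  fixes w :: "'a::euclidean_space \<Rightarrow> real" and p l1 l2 C :: real
  assumes p1: "1 \<le> p" and l1: "0 \<le> l1" and l2: "0 \<le> l2"
    and l12: "0 < l1 + l2" and l12n: "l1 + l2 < real DIM('a)"
    and wt: "is_weight w"
    and C1: "1 \<le> C"
    and H: "\<And>x r. r > 0 \<Longrightarrow> morrey_norm p (phi_w l1 l2 w) w (indicator (ball x r))
        * kothe_norm (morrey_norm p (phi_w l1 l2 w) w) (indicator (ball x r))
      \<le> ennreal C * emeasure lebesgue (ball x r)"
begin

lemma w_nonneg: "0 \<le> w y" using wt unfolding is_weight_def by auto

lemma w_meas[measurable]: "w \<in> borel_measurable lebesgue" using wt unfolding is_weight_def by auto

lemmas lev = lev_leb[OF w_meas]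

lemma ball_fin: "(\<integral>\<^sup>+ y\<in>ball x r. ennreal (w y) \<partial>lebesgue) < top"
proof -
  have "set_integrable lebesgue (cball x r) w" using wt unfolding is_weight_def by auto
  then have "integrable lebesgue (\<lambda>y. indicator (cball x r) y *\<^sub>R w y)" unfolding set_integrable_def .
  then have "(\<integral>\<^sup>+ y. ennreal (indicator (cball x r) y *\<^sub>R w y) \<partial>lebesgue) \<noteq> top" by auto
  moreover have "(\<integral>\<^sup>+ y\<in>ball x r. ennreal (w y) \<partial>lebesgue) \<le> (\<integral>\<^sup>+ y. ennreal (indicator (cball x r) y *\<^sub>R w y) \<partial>lebesgue)"
    by (intro nn_integral_mono) (auto simp: indicator_def)
  ultimately show ?thesis using order.strict_trans1 less_top by blast
qed

lemma ball_w: "(\<integral>\<^sup>+ y\<in>ball x r. ennreal (w y) \<partial>lebesgue) = ennreal (wmeas w (ball x r))"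
  unfolding wmeas_def using ball_fin by simp

lemma wmeas_nonneg: "0 \<le> wmeas w B" unfolding wmeas_def by simp


lemma phi_eq: "wmeas w (ball x r) > 0 \<Longrightarrow> phi_w l1 l2 w x r = r powr l1 * wmeas w (ball x r) powr (l2 / real DIM('a))"
  unfolding phi_w_def by auto

lemma phi_nonneg: "0 \<le> phi_w l1 l2 w x r" unfolding phi_w_def by auto

lemma vol_ball: "r \<ge> 0 \<Longrightarrow> emeasure lebesgue (ball (x::'a) r) = ennreal (unit_ball_vol (real DIM('a)) * r ^ DIM('a))"
  by (rule emeasure_lebesgue_ball)

lemma morrey_le1:
  fixes f :: "'a \<Rightarrow> real"
  assumes "\<And>x r. r > 0 \<Longrightarrow> (\<integral>\<^sup>+ y\<in>ball x r. ennreal (\<bar>f y\<bar> powr p * w y) \<partial>lebesgue) \<le> ennreal (phi_w l1 l2 w x r)"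
  shows "morrey_norm p (phi_w l1 l2 w) w f \<le> 1"
proof -
  have "(SUP xr \<in> {xr. snd xr > 0}.
        (\<integral>\<^sup>+ y \<in> ball (fst xr) (snd xr). ennreal (\<bar>f y\<bar> powr p * w y) \<partial>lebesgue)
          / ennreal (phi_w l1 l2 w (fst xr) (snd xr))) \<le> 1" (is "?S \<le> 1")
  proof (rule SUP_least)
    fix xr :: "'a \<times> real" assume "xr \<in> {xr. snd xr > 0}"
    then have le: "(\<integral>\<^sup>+ y \<in> ball (fst xr) (snd xr). ennreal (\<bar>f y\<bar> powr p * w y) \<partial>lebesgue) \<le> ennreal (phi_w l1 l2 w (fst xr) (snd xr))"
      using assms[of "snd xr" "fst xr"] by auto
    show "(\<integral>\<^sup>+ y \<in> ball (fst xr) (snd xr). ennreal (\<bar>f y\<bar> powr p * w y) \<partial>lebesgue)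
          / ennreal (phi_w l1 l2 w (fst xr) (snd xr)) \<le> 1"
    proof (cases "phi_w l1 l2 w (fst xr) (snd xr) = 0")
      case True
      then have "(\<integral>\<^sup>+ y \<in> ball (fst xr) (snd xr). ennreal (\<bar>f y\<bar> powr p * w y) \<partial>lebesgue) = 0" using le by simp
      then show ?thesis by simp
    next
      case False
      then have "phi_w l1 l2 w (fst xr) (snd xr) > 0" using phi_nonneg[of "fst xr" "snd xr"] by linarith
      have "(\<integral>\<^sup>+ y \<in> ball (fst xr) (snd xr). ennreal (\<bar>f y\<bar> powr p * w y) \<partial>lebesgue)
          / ennreal (phi_w l1 l2 w (fst xr) (snd xr)) \<le> ennreal (phi_w l1 l2 w (fst xr) (snd xr)) / ennreal (phi_w l1 l2 w (fst xr) (snd xr))"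
        by (rule divide_right_mono_ennreal[OF le])
      also have "\<dots> = 1" using \<open>phi_w l1 l2 w (fst xr) (snd xr) > 0\<close> by (intro ennreal_divide_self) auto
      finally show ?thesis .
    qed
  qed
  moreover have "0 \<le> 1/p" using p1 by simp
  ultimately show ?thesis unfolding morrey_norm_def by (rule enn_rpow_le1)
qed

lemma kothe_lower:
  fixes f g :: "'a \<Rightarrow> real"
  assumes "f \<in> borel_measurable lebesgue"
    and "\<And>x r. r > 0 \<Longrightarrow> (\<integral>\<^sup>+ y\<in>ball x r. ennreal (\<bar>f y\<bar> powr p * w y) \<partial>lebesgue) \<le> ennreal (phi_w l1 l2 w x r)"
  shows "(\<integral>\<^sup>+ y. ennreal \<bar>f y * g y\<bar> \<partial>lebesgue) \<le> kothe_norm (morrey_norm p (phi_w l1 l2 w) w) g"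
  unfolding kothe_norm_def
  by (rule SUP_upper) (use assms(1) morrey_le1[OF assms(2)] in simp)


lemma H_real:
  assumes r: "r > 0" and a: "0 \<le> a" and b: "0 \<le> b"
    and ma: "ennreal a \<le> morrey_norm p (phi_w l1 l2 w) w (indicator (ball x r))"
    and kb: "ennreal b \<le> kothe_norm (morrey_norm p (phi_w l1 l2 w) w) (indicator (ball x r))"
  shows "a * b \<le> C * (unit_ball_vol (real DIM('a)) * r ^ DIM('a))"
proof -
  have "ennreal (a * b) = ennreal a * ennreal b" using a b by (rule ennreal_mult)
  also have "\<dots> \<le> morrey_norm p (phi_w l1 l2 w) w (indicator (ball x r))
        * kothe_norm (morrey_norm p (phi_w l1 l2 w) w) (indicator (ball x r))"
    by (rule mult_mono[OF ma kb]) auto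
  also have "\<dots> \<le> ennreal C * emeasure lebesgue (ball x r)" using H[OF r] .
  also have "\<dots> = ennreal C * ennreal (unit_ball_vol (real DIM('a)) * r ^ DIM('a))"
    using r by (subst vol_ball) auto
  also have "\<dots> = ennreal (C * (unit_ball_vol (real DIM('a)) * r ^ DIM('a)))"
    using r C1 by (subst ennreal_mult) auto
  finally show ?thesis using r C1 by (subst (asm) ennreal_le_iff) auto
qed

lemma enn_rpow_mono:
  assumes "X \<le> Y" "0 \<le> a" shows "enn_rpow X a \<le> enn_rpow Y a"
proof (cases "Y = top")
  case True then show ?thesis unfolding enn_rpow_def by simp
next
  case False
  then have "X \<noteq> top" using assms(1) top.extremum_uniqueI by blast
  moreover have "enn2real X \<le> enn2real Y" using assms(1) False by (simp add: enn2real_mono less_top)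
  then have "enn2real X powr a \<le> enn2real Y powr a" using assms(2) by (intro powr_mono2) auto
  ultimately show ?thesis using False unfolding enn_rpow_def by simp
qed

lemma enn_rpow_ennreal: "0 \<le> t \<Longrightarrow> enn_rpow (ennreal t) a = ennreal (t powr a)"
  unfolding enn_rpow_def by simp

lemma phi_pos: "r > 0 \<Longrightarrow> wmeas w (ball x r) > 0 \<Longrightarrow> phi_w l1 l2 w x r > 0"
  using phi_eq by simp

lemma morrey_lower:
  assumes r1: "r1 > 0" and sub: "ball x1 r1 \<subseteq> ball x r" and wp: "wmeas w (ball x1 r1) > 0"
  shows "ennreal ((wmeas w (ball x1 r1) / phi_w l1 l2 w x1 r1) powr (1/p))
     \<le> morrey_norm p (phi_w l1 l2 w) w (indicator (ball x r))"
proof -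
  define w1 where "w1 = wmeas w (ball x1 r1)"
  define f1 where "f1 = phi_w l1 l2 w x1 r1"
  have f1: "f1 > 0" unfolding f1_def using phi_pos[OF r1 wp] .
  have "(\<integral>\<^sup>+ y\<in>ball x1 r1. ennreal (\<bar>indicator (ball x r) y :: real\<bar> powr p * w y) \<partial>lebesgue)
      = (\<integral>\<^sup>+ y\<in>ball x1 r1. ennreal (w y) \<partial>lebesgue)"
    by (intro nn_integral_cong) (use sub in \<open>auto simp: indicator_def\<close>)
  also have "\<dots> = ennreal w1" unfolding w1_def by (rule ball_w)
  finally have eq: "(\<integral>\<^sup>+ y\<in>ball x1 r1. ennreal (\<bar>indicator (ball x r) y :: real\<bar> powr p * w y) \<partial>lebesgue) = ennreal w1" .
  have "ennreal (w1 / f1) = ennreal w1 / ennreal f1" using f1 wmeas_nonneg[of "ball x1 r1"]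
    by (simp add: divide_ennreal w1_def)
  also have "\<dots> \<le> (SUP xr \<in> {xr. snd xr > 0}.
        (\<integral>\<^sup>+ y \<in> ball (fst xr) (snd xr). ennreal (\<bar>indicator (ball x r) y :: real\<bar> powr p * w y) \<partial>lebesgue)
          / ennreal (phi_w l1 l2 w (fst xr) (snd xr)))"
    unfolding eq[symmetric] f1_def by (rule SUP_upper2[of "(x1, r1)"]) (use r1 in auto)
  finally have le: "ennreal (w1 / f1) \<le> (SUP xr \<in> {xr. snd xr > 0}.
        (\<integral>\<^sup>+ y \<in> ball (fst xr) (snd xr). ennreal (\<bar>indicator (ball x r) y :: real\<bar> powr p * w y) \<partial>lebesgue)
          / ennreal (phi_w l1 l2 w (fst xr) (snd xr)))" .
  have "ennreal ((w1 / f1) powr (1/p)) = enn_rpow (ennreal (w1 / f1)) (1/p)"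
    using f1 wmeas_nonneg[of "ball x1 r1"] by (simp add: enn_rpow_ennreal w1_def)
  also have "\<dots> \<le> morrey_norm p (phi_w l1 l2 w) w (indicator (ball x r))"
    unfolding morrey_norm_def by (rule enn_rpow_mono[OF le]) (use p1 in simp)
  finally show ?thesis unfolding w1_def f1_def .
qed


lemma zero_set:
  assumes r: "r > 0" and Z: "emeasure lebesgue (ball x r \<inter> {y. w y = 0}) > 0"
  shows "wmeas w (ball x r) = 0"
proof (rule ccontr)
  assume "wmeas w (ball x r) \<noteq> 0"
  then have wp: "wmeas w (ball x r) > 0" using wmeas_nonneg[of "ball x r"] by linarith
  define X where "X = (wmeas w (ball x r) / phi_w l1 l2 w x r) powr (1/p)"
  have X: "X > 0" unfolding X_def using phi_pos[OF r wp] wp by simp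
  have mX: "ennreal X \<le> morrey_norm p (phi_w l1 l2 w) w (indicator (ball x r))"
    unfolding X_def by (rule morrey_lower[OF r _ wp]) auto
  define Zs where "Zs = ball x r \<inter> {y. w y = 0}"
  have Zm: "Zs \<in> sets lebesgue" unfolding Zs_def using lev by (intro sets.Int) auto
  have "emeasure lebesgue Zs \<le> emeasure lebesgue (ball x r)"
    unfolding Zs_def by (intro emeasure_mono) auto
  also have "\<dots> < top" using emeasure_lborel_ball_finite by simp
  finally have Zfin: "emeasure lebesgue Zs < top" .
  define m where "m = measure lebesgue Zs"
  have em: "emeasure lebesgue Zs = ennreal m" unfolding m_def using Zfin
    by (simp add: emeasure_eq_ennreal_measure less_top)
  have m: "m > 0" using Z em unfolding Zs_def by (simp add: m_def Zs_def)
  define k where "k = (C * (unit_ball_vol (real DIM('a)) * r ^ DIM('a)) + 1) / (X * m)"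
  have k: "k > 0" unfolding k_def using X m C1 r by (intro divide_pos_pos add_pos_nonneg) auto
  define f where "f = (\<lambda>y. k * indicator Zs y :: real)"
  have fm: "f \<in> borel_measurable lebesgue" unfolding f_def using Zm by measurable
  have test: "(\<integral>\<^sup>+ y\<in>ball x' r'. ennreal (\<bar>f y\<bar> powr p * w y) \<partial>lebesgue) \<le> ennreal (phi_w l1 l2 w x' r')" for x' r'
  proof -
    have "\<And>y. ennreal (\<bar>f y\<bar> powr p * w y) * indicator (ball x' r') y = 0"
      unfolding f_def Zs_def by (auto simp: indicator_def)
    then have "(\<integral>\<^sup>+ y\<in>ball x' r'. ennreal (\<bar>f y\<bar> powr p * w y) \<partial>lebesgue) = 0"
      by (simp only: nn_integral_0_iff_AE) (simp del: mult_eq_0_iff)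
    then show ?thesis by simp
  qed
  have "(\<integral>\<^sup>+ y. ennreal \<bar>f y * indicator (ball x r) y\<bar> \<partial>lebesgue) = (\<integral>\<^sup>+ y. ennreal k * indicator Zs y \<partial>lebesgue)"
    unfolding f_def Zs_def by (intro nn_integral_cong) (use k in \<open>auto simp: indicator_def\<close>)
  also have "\<dots> = ennreal k * emeasure lebesgue Zs" using Zm by (rule nn_integral_cmult_indicator)
  also have "\<dots> = ennreal (k * m)" using em k m by (simp add: ennreal_mult)
  finally have "ennreal (k * m) \<le> kothe_norm (morrey_norm p (phi_w l1 l2 w) w) (indicator (ball x r))"
    using kothe_lower[OF fm test, of "indicator (ball x r)"] by simp
  from H_real[OF r _ _ mX this] X k m
  have "X * (k * m) \<le> C * (unit_ball_vol (real DIM('a)) * r ^ DIM('a))" by simp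
  moreover have "X * (k * m) = C * (unit_ball_vol (real DIM('a)) * r ^ DIM('a)) + 1"
    unfolding k_def using X m by (simp add: field_simps)
  ultimately show False by simp
qed


definition rr where "rr = (real DIM('a) * p + l1) / (real DIM('a) - l2)"
definition sg where "sg = 1 / (rr - 1)"

lemma rr_gt1: "rr > 1"
proof -
  have n: "real DIM('a) - l2 > 0" using l12n l1 by linarith
  have "real DIM('a) * p \<ge> real DIM('a)" using p1 by simp
  then have "real DIM('a) * p + l1 > real DIM('a) - l2" using l12 by linarith
  then show ?thesis unfolding rr_def using n by simp
qed

lemma sg_pos: "sg > 0" unfolding sg_def using rr_gt1 by simp

lemma exp_id: "l2 / real DIM('a) - sg * ((real DIM('a) - l1 - l2) / real DIM('a)) = 1 - sg * p"
proof -
  have n: "real DIM('a) - l2 \<noteq> 0" using l12n l1 by linarith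
  have r1: "rr - 1 = (real DIM('a) * p + l1 + l2 - real DIM('a)) / (real DIM('a) - l2)"
    unfolding rr_def using n by (simp add: field_simps)
  have nz: "real DIM('a) * p + l1 + l2 - real DIM('a) \<noteq> 0" using rr_gt1 r1 by auto
  have sg: "sg = (real DIM('a) - l2) / (real DIM('a) * p + l1 + l2 - real DIM('a))"
    unfolding sg_def r1 using n nz by simp
  show ?thesis unfolding sg using exp_alg[of "real DIM('a)" p l1 l2] nz by simp
qed

lemma exp_id2: "1 / rr - sg * (1 - 1 / rr) = 0"
  unfolding sg_def using rr_gt1 by (simp add: field_simps)

lemma V_fin:
  assumes Esub: "E \<subseteq> ball x r" and ep: "\<epsilon> > 0" and Ew: "\<And>y. y \<in> E \<Longrightarrow> \<epsilon> \<le> w y" and Em: "E \<in> sets lebesgue"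
  shows "(\<integral>\<^sup>+ y\<in>E. ennreal (w y powr (-sg)) \<partial>lebesgue) < top"
proof -
  have "(\<integral>\<^sup>+ y\<in>E. ennreal (w y powr (-sg)) \<partial>lebesgue) \<le> (\<integral>\<^sup>+ y. ennreal (\<epsilon> powr (-sg)) * indicator E y \<partial>lebesgue)"
  proof (intro nn_integral_mono)
    fix y show "ennreal (w y powr (-sg)) * indicator E y \<le> ennreal (\<epsilon> powr (-sg)) * indicator E y"
    proof (cases "y \<in> E")
      case True
      then have "w y powr (-sg) \<le> \<epsilon> powr (-sg)" using Ew[OF True] ep sg_pos by (intro powr_mono2') auto
      then show ?thesis using True by (simp add: ennreal_leI)
    qed simp
  qed
  also have "\<dots> = ennreal (\<epsilon> powr (-sg)) * emeasure lebesgue E" using Em by (rule nn_integral_cmult_indicator)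
  also have "\<dots> < top"
  proof -
    have "emeasure lebesgue E \<le> emeasure lebesgue (ball x r)" using Esub by (intro emeasure_mono) auto
    also have "\<dots> < top" using emeasure_lborel_ball_finite by simp
    finally show ?thesis by (simp add: ennreal_mult_less_top)
  qed
  finally show ?thesis .
qed


lemma core:
  assumes r: "r > 0" and r1: "r1 > 0" and sub: "ball x1 r1 \<subseteq> ball x r" and wp: "wmeas w (ball x1 r1) > 0"
    and Em: "E \<in> sets lebesgue" and Esub: "E \<subseteq> ball x r" and ep: "\<epsilon> > 0" and Ew: "\<And>y. y \<in> E \<Longrightarrow> \<epsilon> \<le> w y"
    and vp: "v > 0" and vdef: "(\<integral>\<^sup>+ y\<in>E. ennreal (w y powr (-sg)) \<partial>lebesgue) = ennreal v"
  shows "(wmeas w (ball x1 r1) / phi_w l1 l2 w x1 r1) powr (1/p) *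
    ((unit_ball_vol (real DIM('a)) powr (l1 / real DIM('a)) * v powr ((real DIM('a) - l1 - l2) / real DIM('a))) powr (-1/p) * v)
    \<le> C * (unit_ball_vol (real DIM('a)) * r ^ DIM('a))"
proof -
  define n where "n = real DIM('a)"
  define om where "om = unit_ball_vol (real DIM('a))"
  have n: "n > 0" unfolding n_def by simp
  have om: "om > 0" unfolding om_def by simp
  define al where "al = l2 / n"
  define be where "be = (n - l1 - l2) / n"
  define ga where "ga = l1 / n"
  have abg: "0 \<le> al" "0 \<le> be" "0 \<le> ga" "al + be + ga = 1"
    unfolding al_def be_def ga_def using n l1 l2 l12n by (auto simp: n_def field_simps)
  define kk where "kk = (om powr ga * v powr be) powr (-1/p)"
  have kk: "kk > 0" unfolding kk_def using om vp by simp
  have kkp: "kk powr p = 1 / (om powr ga * v powr be)"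
  proof -
    have "kk powr p = (om powr ga * v powr be) powr ((-1/p) * p)" unfolding kk_def by (rule powr_powr)
    also have "(-1/p) * p = -1" using p1 by simp
    also have "(om powr ga * v powr be) powr (-1) = 1 / (om powr ga * v powr be)"
      using om vp by (simp add: powr_minus divide_inverse)
    finally show ?thesis .
  qed
  define f where "f = (\<lambda>y. kk * indicator E y * w y powr (-sg))"
  have fm: "f \<in> borel_measurable lebesgue" unfolding f_def using Em by measurable
  have Eleb: "\<And>y. y \<in> E \<Longrightarrow> w y > 0" using Ew ep by (meson less_le_trans)
  have "(\<integral>\<^sup>+ y. ennreal \<bar>f y * indicator (ball x r) y\<bar> \<partial>lebesgue) = (\<integral>\<^sup>+ y. ennreal kk * (ennreal (w y powr (-sg)) * indicator E y) \<partial>lebesgue)"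
  proof (intro nn_integral_cong)
    fix y show "ennreal \<bar>f y * indicator (ball x r) y\<bar> = ennreal kk * (ennreal (w y powr (-sg)) * indicator E y)"
    proof (cases "y \<in> E")
      case True
      then have "y \<in> ball x r" using Esub by auto
      then show ?thesis using True kk unfolding f_def by (simp add: ennreal_mult)
    qed (simp add: f_def)
  qed
  also have "\<dots> = ennreal kk * ennreal v" using vdef Em by (subst nn_integral_cmult) auto
  also have "\<dots> = ennreal (kk * v)" using kk vp by (simp add: ennreal_mult)
  finally have kl0: "(\<integral>\<^sup>+ y. ennreal \<bar>f y * indicator (ball x r) y\<bar> \<partial>lebesgue) = ennreal (kk * v)" .
  have test: "(\<integral>\<^sup>+ y\<in>ball x' r'. ennreal (\<bar>f y\<bar> powr p * w y) \<partial>lebesgue) \<le> ennreal (phi_w l1 l2 w x' r')"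
    if r': "r' > 0" for x' r'
  proof -
    define S where "S = ball x' r' \<inter> E"
    have Sm: "S \<in> sets lebesgue" unfolding S_def using Em by auto
    define a where "a = wmeas w (ball x' r')"
    have pw: "ennreal (\<bar>f y\<bar> powr p * w y) * indicator (ball x' r') y
       = ennreal (kk powr p) * (ennreal (w y powr al * (w y powr (-sg)) powr be) * indicator S y)" for y
    proof (cases "y \<in> S")
      case True
      then have yE: "y \<in> E" and wy: "w y > 0" using Eleb unfolding S_def by auto
      have "\<bar>f y\<bar> powr p * w y = kk powr p * (w y powr (-sg * p) * w y powr 1)"
        unfolding f_def using yE kk wy by (simp add: powr_mult powr_powr)
      also have "w y powr (-sg * p) * w y powr 1 = w y powr (1 - sg * p)"
        by (subst powr_add[symmetric]) (simp add: algebra_simps)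
      also have "1 - sg * p = al - sg * be" unfolding al_def be_def n_def using exp_id by simp
      also have "kk powr p * w y powr (al - sg * be) = kk powr p * (w y powr al * (w y powr (-sg)) powr be)"
      proof -
        have "(w y powr (-sg)) powr be = w y powr (-sg * be)" by (rule powr_powr)
        moreover have "w y powr (al - sg * be) = w y powr al * w y powr (-sg * be)"
          by (subst powr_add[symmetric]) (simp add: algebra_simps)
        ultimately show ?thesis by simp
      qed
      moreover have "y \<in> ball x' r'" using True unfolding S_def by auto
      ultimately show ?thesis using True kk by (simp add: ennreal_mult)
    next
      case False
      then have "y \<notin> ball x' r' \<or> y \<notin> E" unfolding S_def by auto
      then show ?thesis using False p1 unfolding f_def by (auto simp: indicator_def)
    qed
    have eqI: "(\<integral>\<^sup>+ y\<in>ball x' r'. ennreal (\<bar>f y\<bar> powr p * w y) \<partial>lebesgue)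
        = ennreal (kk powr p) * (\<integral>\<^sup>+ y. ennreal (w y powr al * (w y powr (-sg)) powr be) * indicator S y \<partial>lebesgue)"
      unfolding pw using Sm by (subst nn_integral_cmult) auto
    have wS: "(\<integral>\<^sup>+ y. ennreal (w y) * indicator S y \<partial>lebesgue) \<le> ennreal a"
    proof -
      have "(\<integral>\<^sup>+ y. ennreal (w y) * indicator S y \<partial>lebesgue) \<le> (\<integral>\<^sup>+ y\<in>ball x' r'. ennreal (w y) \<partial>lebesgue)"
        unfolding S_def by (intro nn_integral_mono) (auto simp: indicator_def)
      then show ?thesis unfolding a_def ball_w .
    qed
    show ?thesis
    proof (cases "a = 0")
      case True
      have "ennreal \<epsilon> * emeasure lebesgue S = (\<integral>\<^sup>+ y. ennreal \<epsilon> * indicator S y \<partial>lebesgue)"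
        using Sm by (simp add: nn_integral_cmult_indicator)
      also have "\<dots> \<le> (\<integral>\<^sup>+ y. ennreal (w y) * indicator S y \<partial>lebesgue)"
        by (intro nn_integral_mono) (auto simp: indicator_def S_def intro!: ennreal_leI Ew)
      also have "\<dots> \<le> 0" using wS True by simp
      finally have "emeasure lebesgue S = 0" using ep by simp
      then have "S \<in> null_sets lebesgue" using Sm by auto
      then have "(\<integral>\<^sup>+ y. ennreal (w y powr al * (w y powr (-sg)) powr be) * indicator S y \<partial>lebesgue) = 0"
        by (rule nn_integral_null_set)
      then show ?thesis unfolding eqI by simp
    next
      case False
      then have ap: "a > 0" unfolding a_def using wmeas_nonneg[of "ball x' r'"] by linarith
      define c where "c = om * r' ^ DIM('a)"
      have c: "c > 0" unfolding c_def using om r' by simp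
      have vS: "(\<integral>\<^sup>+ y. ennreal (w y powr (-sg)) * indicator S y \<partial>lebesgue) \<le> ennreal v"
      proof -
        have "(\<integral>\<^sup>+ y. ennreal (w y powr (-sg)) * indicator S y \<partial>lebesgue) \<le> (\<integral>\<^sup>+ y\<in>E. ennreal (w y powr (-sg)) \<partial>lebesgue)"
          unfolding S_def by (intro nn_integral_mono) (auto simp: indicator_def)
        then show ?thesis unfolding vdef .
      qed
      have mS: "emeasure lebesgue S \<le> ennreal c"
      proof -
        have "emeasure lebesgue S \<le> emeasure lebesgue (ball x' r')" unfolding S_def by (intro emeasure_mono) auto
        also have "\<dots> = ennreal c" unfolding c_def om_def using r' by (intro vol_ball) simp
        finally show ?thesis .
      qed
      have h: "(\<integral>\<^sup>+ y. ennreal (w y powr al * (w y powr (-sg)) powr be) * indicator S y \<partial>lebesgue)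
          \<le> ennreal (a powr al * v powr be * c powr ga)"
        by (rule hold3[OF Sm w_meas _ _ _ abg ap vp c wS vS mS])
           (use Eleb in \<open>force simp: S_def\<close>)+
      have "kk powr p * (a powr al * v powr be * c powr ga) = r' powr l1 * a powr al"
      proof -
        have "c powr ga = om powr ga * (r' powr n) powr ga" unfolding c_def using om r'
          by (simp add: powr_mult powr_realpow n_def)
        also have "(r' powr n) powr ga = r' powr l1" unfolding ga_def using n by (simp add: powr_powr)
        finally have "c powr ga = om powr ga * r' powr l1" .
        then show ?thesis unfolding kkp using om vp by (simp add: field_simps)
      qed
      also have "\<dots> = phi_w l1 l2 w x' r'" using phi_eq[of x' r'] ap unfolding a_def al_def n_def by simp
      finally have eqp: "kk powr p * (a powr al * v powr be * c powr ga) = phi_w l1 l2 w x' r'" .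
      have "(\<integral>\<^sup>+ y\<in>ball x' r'. ennreal (\<bar>f y\<bar> powr p * w y) \<partial>lebesgue) \<le> ennreal (kk powr p) * ennreal (a powr al * v powr be * c powr ga)"
        unfolding eqI by (intro mult_left_mono h) auto
      also have "\<dots> = ennreal (phi_w l1 l2 w x' r')" unfolding eqp[symmetric] by (simp add: ennreal_mult)
      finally show ?thesis .
    qed
  qed
  have kl: "ennreal (kk * v) \<le> kothe_norm (morrey_norm p (phi_w l1 l2 w) w) (indicator (ball x r))"
    using kothe_lower[OF fm test, of "indicator (ball x r)"] unfolding kl0 by simp
  have ml: "ennreal ((wmeas w (ball x1 r1) / phi_w l1 l2 w x1 r1) powr (1/p)) \<le> morrey_norm p (phi_w l1 l2 w) w (indicator (ball x r))"
    by (rule morrey_lower[OF r1 sub wp])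
  have "(wmeas w (ball x1 r1) / phi_w l1 l2 w x1 r1) powr (1/p) * (kk * v) \<le> C * (unit_ball_vol (real DIM('a)) * r ^ DIM('a))"
    by (rule H_real[OF r _ _ ml kl]) (use kk vp in auto)
  then show ?thesis unfolding kk_def om_def n_def ga_def be_def .
qed


definition Es where "Es x r m = ball x r \<inter> {y. 1 / real (Suc m) \<le> w y}"

lemma Es_sets: "Es x r m \<in> sets lebesgue"
  unfolding Es_def using lev by (intro sets.Int) auto

lemma Es_sub: "Es x r m \<subseteq> ball x r" unfolding Es_def by auto

lemma Es_w: "y \<in> Es x r m \<Longrightarrow> 1 / real (Suc m) \<le> w y" unfolding Es_def by auto

lemma Es_inc: "incseq (Es x r)"
proof (rule incseq_SucI)
  fix m
  have "1 / real (Suc (Suc m)) \<le> 1 / real (Suc m)" by (simp add: frac_le)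
  then show "Es x r m \<subseteq> Es x r (Suc m)" unfolding Es_def by auto
qed

lemma Es_Un: "(\<Union>m. Es x r m) = ball x r \<inter> {y. 0 < w y}"
proof
  show "(\<Union>m. Es x r m) \<subseteq> ball x r \<inter> {y. 0 < w y}"
  proof
    fix y assume "y \<in> (\<Union>m. Es x r m)"
    then obtain m where "y \<in> Es x r m" by auto
    moreover have "0 < 1 / real (Suc m)" by simp
    ultimately show "y \<in> ball x r \<inter> {y. 0 < w y}" unfolding Es_def using less_le_trans by blast
  qed
next
  show "ball x r \<inter> {y. 0 < w y} \<subseteq> (\<Union>m. Es x r m)"
  proof
    fix y assume y: "y \<in> ball x r \<inter> {y. 0 < w y}"
    then obtain m where "inverse (real (Suc m)) < w y" using reals_Archimedean[of "w y"] by auto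
    then have "y \<in> Es x r m" using y unfolding Es_def by (auto simp: inverse_eq_divide)
    then show "y \<in> (\<Union>m. Es x r m)" by auto
  qed
qed

lemma Vsup: "(SUP m. \<integral>\<^sup>+ y. ennreal (w y powr (-sg)) * indicator (Es x r m) y \<partial>lebesgue)
   = (\<integral>\<^sup>+ y. ennreal (w y powr (-sg)) * indicator (ball x r \<inter> {y. 0 < w y}) y \<partial>lebesgue)"
proof -
  have pt: "(SUP m. ennreal (w y powr (-sg)) * indicator (Es x r m) y) = ennreal (w y powr (-sg)) * indicator (ball x r \<inter> {y. 0 < w y}) y" for y
  proof (cases "y \<in> ball x r \<inter> {y. 0 < w y}")
    case True
    then obtain m0 where m0: "y \<in> Es x r m0" unfolding Es_Un[symmetric] by auto
    show ?thesis
    proof (rule antisym)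
      show "(SUP m. ennreal (w y powr (-sg)) * indicator (Es x r m) y) \<le> ennreal (w y powr (-sg)) * indicator (ball x r \<inter> {y. 0 < w y}) y"
        using True by (intro SUP_least) (auto simp: indicator_def)
      show "ennreal (w y powr (-sg)) * indicator (ball x r \<inter> {y. 0 < w y}) y \<le> (SUP m. ennreal (w y powr (-sg)) * indicator (Es x r m) y)"
        using True m0 by (intro SUP_upper2[of m0]) auto
    qed
  next
    case False
    then have "\<And>m. y \<notin> Es x r m" unfolding Es_Un[symmetric] by auto
    then show ?thesis using False by simp
  qed
  have "(\<integral>\<^sup>+ y. ennreal (w y powr (-sg)) * indicator (ball x r \<inter> {y. 0 < w y}) y \<partial>lebesgue)
     = (\<integral>\<^sup>+ y. (SUP m. ennreal (w y powr (-sg)) * indicator (Es x r m) y) \<partial>lebesgue)"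
    unfolding pt ..
  also have "\<dots> = (SUP m. \<integral>\<^sup>+ y. ennreal (w y powr (-sg)) * indicator (Es x r m) y \<partial>lebesgue)"
  proof (rule nn_integral_monotone_convergence_SUP)
    show "incseq (\<lambda>m y. ennreal (w y powr (-sg)) * indicator (Es x r m) y)"
    proof (intro incseq_SucI le_funI)
      fix m y
      have "indicator (Es x r m) y \<le> (indicator (Es x r (Suc m)) y :: ennreal)"
        using incseqD[OF Es_inc[of x r], of m "Suc m"] by (auto simp: indicator_def)
      then show "ennreal (w y powr (-sg)) * indicator (Es x r m) y \<le> ennreal (w y powr (-sg)) * indicator (Es x r (Suc m)) y"
        by (intro mult_left_mono) auto
    qed
    show "\<And>i. (\<lambda>y. ennreal (w y powr (-sg)) * indicator (Es x r i) y) \<in> borel_measurable lebesgue"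
      using Es_sets by measurable
  qed
  finally show ?thesis ..
qed


definition Kb where "Kb = C powr (real DIM('a) * p / (real DIM('a) - l2)) * unit_ball_vol (real DIM('a)) powr
   (real DIM('a) * p / (real DIM('a) - l2) + (real DIM('a) * p / (real DIM('a) - l2)) * (l1 / real DIM('a)) / p - rr)"

lemma Kb_pos: "Kb > 0"
proof -
  have "C powr (real DIM('a) * p / (real DIM('a) - l2)) > 0" using C1 by simp
  moreover have "unit_ball_vol (real DIM('a)) powr
   (real DIM('a) * p / (real DIM('a) - l2) + (real DIM('a) * p / (real DIM('a) - l2)) * (l1 / real DIM('a)) / p - rr) > 0"
    using unit_ball_vol_pos[of "real DIM('a)"] by (simp del: unit_ball_vol_pos)
  ultimately show ?thesis unfolding Kb_def by (rule mult_pos_pos)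
qed

lemma Vm_fin: "(\<integral>\<^sup>+ y. ennreal (w y powr (-sg)) * indicator (Es x r m) y \<partial>lebesgue) < top"
  by (rule V_fin[OF Es_sub _ Es_w Es_sets]) auto

lemma bound_m:
  assumes r: "r > 0" and wp: "wmeas w (ball x r) > 0"
  shows "wmeas w (ball x r) * (enn2real (\<integral>\<^sup>+ y. ennreal (w y powr (-sg)) * indicator (Es x r m) y \<partial>lebesgue)) powr (rr - 1)
     \<le> Kb * (unit_ball_vol (real DIM('a)) * r powr real DIM('a)) powr rr"
proof -
  define v where "v = enn2real (\<integral>\<^sup>+ y. ennreal (w y powr (-sg)) * indicator (Es x r m) y \<partial>lebesgue)"
  have vdef: "(\<integral>\<^sup>+ y. ennreal (w y powr (-sg)) * indicator (Es x r m) y \<partial>lebesgue) = ennreal v"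
    unfolding v_def using Vm_fin by simp
  have R: "0 \<le> Kb * (unit_ball_vol (real DIM('a)) * r powr real DIM('a)) powr rr" using Kb_pos by simp
  show ?thesis
  proof (cases "v = 0")
    case True
    then show ?thesis using R unfolding v_def[symmetric] by simp
  next
    case False
    then have vp: "v > 0" using enn2real_nonneg[of "\<integral>\<^sup>+ y. ennreal (w y powr (-sg)) * indicator (Es x r m) y \<partial>lebesgue"] unfolding v_def by linarith
    have h0: "(wmeas w (ball x r) / phi_w l1 l2 w x r) powr (1/p) *
      ((unit_ball_vol (real DIM('a)) powr (l1 / real DIM('a)) * v powr ((real DIM('a) - l1 - l2) / real DIM('a))) powr (-1/p) * v)
      \<le> C * (unit_ball_vol (real DIM('a)) * r ^ DIM('a))"
      by (rule core[OF r r order_refl wp Es_sets Es_sub _ Es_w vp vdef]) simp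
    have h: "(wmeas w (ball x r) / (r powr l1 * wmeas w (ball x r) powr (l2 / real DIM('a)))) powr (1/p) *
      ((unit_ball_vol (real DIM('a)) powr (l1 / real DIM('a)) * v powr ((real DIM('a) - l1 - l2) / real DIM('a))) powr (-1/p) * v)
      \<le> C * (unit_ball_vol (real DIM('a)) * r powr real DIM('a))"
      using h0 unfolding phi_eq[OF wp] powr_realpow[OF r] .
    have "wmeas w (ball x r) * v powr ((real DIM('a) * p + l1) / (real DIM('a) - l2) - 1) \<le>
     (C powr (real DIM('a) * p / (real DIM('a) - l2)) * unit_ball_vol (real DIM('a)) powr (real DIM('a) * p / (real DIM('a) - l2) + (real DIM('a) * p / (real DIM('a) - l2)) * (l1/real DIM('a)) / p - (real DIM('a) * p + l1) / (real DIM('a) - l2)))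
       * (unit_ball_vol (real DIM('a)) * r powr real DIM('a)) powr ((real DIM('a) * p + l1) / (real DIM('a) - l2))"
      by (rule alg_b[OF _ p1 l1 l2 l12n wp r vp _ _ h]) (use C1 in auto)
    then show ?thesis unfolding v_def Kb_def rr_def .
  qed
qed


lemma muck_ball:
  assumes s: "s > 0"
  shows "(\<integral>\<^sup>+ y \<in> ball x s. ennreal (w y) \<partial>lebesgue) / emeasure lebesgue (ball x s)
      * enn_rpow ((\<integral>\<^sup>+ y \<in> ball x s.
            (if w y = 0 then top else ennreal (w y powr (1 - rr / (rr - 1)))) \<partial>lebesgue)
           / emeasure lebesgue (ball x s)) (rr - 1)
      \<le> ennreal Kb"
proof -
  define Mr where "Mr = unit_ball_vol (real DIM('a)) * s powr real DIM('a)"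
  have Mr: "Mr > 0" unfolding Mr_def using s by simp
  have em: "emeasure lebesgue (ball x s) = ennreal Mr"
    unfolding Mr_def using s by (simp add: vol_ball powr_realpow del: emeasure_completion)
  define wB where "wB = wmeas w (ball x s)"
  have W: "(\<integral>\<^sup>+ y \<in> ball x s. ennreal (w y) \<partial>lebesgue) = ennreal wB" unfolding wB_def by (rule ball_w)
  show ?thesis
  proof (cases "wB = 0")
    case True
    then show ?thesis unfolding W by simp
  next
    case False
    then have wp: "wB > 0" using wmeas_nonneg[of "ball x s"] unfolding wB_def by linarith
    have Z: "emeasure lebesgue (ball x s \<inter> {y. w y = 0}) = 0"
      using zero_set[OF s] wp unfolding wB_def by (metis not_gr_zero order_less_irrefl)
    have Zn: "ball x s \<inter> {y. w y = 0} \<in> null_sets lebesgue" using Z lev by (auto intro: sets.Int)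
    have ex: "1 - rr / (rr - 1) = - sg" unfolding sg_def using rr_gt1 by (simp add: field_simps)
    have "(\<integral>\<^sup>+ y \<in> ball x s. (if w y = 0 then top else ennreal (w y powr (1 - rr / (rr - 1)))) \<partial>lebesgue)
        = (\<integral>\<^sup>+ y. ennreal (w y powr (-sg)) * indicator (ball x s \<inter> {y. 0 < w y}) y \<partial>lebesgue)"
    proof (rule nn_integral_cong_AE)
      show "AE y in lebesgue. (if w y = 0 then top else ennreal (w y powr (1 - rr / (rr - 1)))) * indicator (ball x s) y
          = ennreal (w y powr (-sg)) * indicator (ball x s \<inter> {y. 0 < w y}) y"
      proof (rule AE_I'[OF Zn])
        show "{y \<in> space lebesgue. \<not> ((if w y = 0 then top else ennreal (w y powr (1 - rr / (rr - 1)))) * indicator (ball x s) y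
          = ennreal (w y powr (-sg)) * indicator (ball x s \<inter> {y. 0 < w y}) y)} \<subseteq> ball x s \<inter> {y. w y = 0}"
        proof
          fix y assume y: "y \<in> {y \<in> space lebesgue. \<not> ((if w y = 0 then top else ennreal (w y powr (1 - rr / (rr - 1)))) * indicator (ball x s) y
            = ennreal (w y powr (-sg)) * indicator (ball x s \<inter> {y. 0 < w y}) y)}"
          have "y \<in> ball x s"
          proof (rule ccontr)
            assume "y \<notin> ball x s" then show False using y by simp
          qed
          moreover have "w y = 0"
          proof (rule ccontr)
            assume "w y \<noteq> 0"
            then have "w y > 0" using w_nonneg[of y] by linarith
            then show False using y \<open>y \<in> ball x s\<close> ex by simp
          qed
          ultimately show "y \<in> ball x s \<inter> {y. w y = 0}" by simp
        qed
      qed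
    qed
    also have "\<dots> = (SUP m. \<integral>\<^sup>+ y. ennreal (w y powr (-sg)) * indicator (Es x s m) y \<partial>lebesgue)"
      by (rule Vsup[symmetric])
    finally have Veq: "(\<integral>\<^sup>+ y \<in> ball x s. (if w y = 0 then top else ennreal (w y powr (1 - rr / (rr - 1)))) \<partial>lebesgue)
       = (SUP m. \<integral>\<^sup>+ y. ennreal (w y powr (-sg)) * indicator (Es x s m) y \<partial>lebesgue)" .
    define T where "T = (Kb * Mr powr rr / wB) powr (1 / (rr - 1))"
    have rr1: "rr - 1 > 0" using rr_gt1 by simp
    have Tp: "T > 0" unfolding T_def using Kb_pos Mr wp by simp
    have Vm: "(\<integral>\<^sup>+ y. ennreal (w y powr (-sg)) * indicator (Es x s m) y \<partial>lebesgue) \<le> ennreal T" for m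
    proof -
      define vm where "vm = enn2real (\<integral>\<^sup>+ y. ennreal (w y powr (-sg)) * indicator (Es x s m) y \<partial>lebesgue)"
      have vmeq: "(\<integral>\<^sup>+ y. ennreal (w y powr (-sg)) * indicator (Es x s m) y \<partial>lebesgue) = ennreal vm"
        unfolding vm_def using Vm_fin by simp
      have vm0: "vm \<ge> 0" unfolding vm_def by simp
      have b: "wB * vm powr (rr - 1) \<le> Kb * Mr powr rr"
        using bound_m[OF s wp[unfolded wB_def], where m=m] unfolding wB_def[symmetric] vm_def[symmetric] Mr_def .
      then have "vm powr (rr - 1) \<le> Kb * Mr powr rr / wB" using wp by (simp add: field_simps)
      then have "(vm powr (rr - 1)) powr (1 / (rr - 1)) \<le> (Kb * Mr powr rr / wB) powr (1 / (rr - 1))"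
        using rr1 by (intro powr_mono2) auto
      also have "(vm powr (rr - 1)) powr (1 / (rr - 1)) = vm" using rr1 vm0 by (simp add: powr_powr)
      finally have "vm \<le> T" unfolding T_def .
      then show ?thesis unfolding vmeq by (rule ennreal_leI)
    qed
    have Vle: "(\<integral>\<^sup>+ y \<in> ball x s. (if w y = 0 then top else ennreal (w y powr (1 - rr / (rr - 1)))) \<partial>lebesgue) \<le> ennreal T"
      unfolding Veq by (rule SUP_least) (rule Vm)
    define v where "v = enn2real (\<integral>\<^sup>+ y \<in> ball x s. (if w y = 0 then top else ennreal (w y powr (1 - rr / (rr - 1)))) \<partial>lebesgue)"
    have veq: "(\<integral>\<^sup>+ y \<in> ball x s. (if w y = 0 then top else ennreal (w y powr (1 - rr / (rr - 1)))) \<partial>lebesgue) = ennreal v"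
      unfolding v_def using Vle by (simp add: top.not_eq_extremum order_le_less_trans)
    have v0: "v \<ge> 0" unfolding v_def by simp
    have vT: "v \<le> T" using Vle unfolding veq using Tp by simp
    have "ennreal wB / ennreal Mr * enn_rpow (ennreal v / ennreal Mr) (rr - 1)
        = ennreal (wB / Mr) * ennreal ((v / Mr) powr (rr - 1))"
      using Mr wp v0 by (simp add: divide_ennreal enn_rpow_ennreal)
    also have "\<dots> = ennreal (wB / Mr * (v / Mr) powr (rr - 1))" using Mr wp v0 by (intro ennreal_mult[symmetric]) auto
    also have "\<dots> \<le> ennreal (wB / Mr * (T / Mr) powr (rr - 1))"
    proof (rule ennreal_leI, rule mult_left_mono)
      show "(v / Mr) powr (rr - 1) \<le> (T / Mr) powr (rr - 1)"
        using vT v0 Mr rr1 by (intro powr_mono2 divide_right_mono) auto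
    qed (use wp Mr in auto)
    also have "wB / Mr * (T / Mr) powr (rr - 1) = Kb"
    proof -
      have "T powr (rr - 1) = Kb * Mr powr rr / wB" unfolding T_def using rr1 Kb_pos Mr wp by (simp add: powr_powr)
      moreover have "Mr powr rr = Mr * Mr powr (rr - 1)" using Mr by (simp add: powr_diff)
      ultimately show ?thesis using Mr wp Tp by (simp add: powr_divide field_simps)
    qed
    finally show ?thesis unfolding W veq em .
  qed
qed


lemma measure_ball': "r > 0 \<Longrightarrow> measure lebesgue (ball (x::'a) r) = unit_ball_vol (real DIM('a)) * r powr real DIM('a)"
  using measure_lebesgue_ball[of r x] by (simp add: powr_realpow)

lemma rd_ball:
  assumes r1: "r1 > 0" and r2: "r2 > 0" and sub: "ball x1 r1 \<subseteq> ball x2 r2"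
  shows "wmeas w (ball x1 r1) / wmeas w (ball x2 r2)
     \<le> (Kb * 2 powr rr) * (measure lebesgue (ball x1 r1) / measure lebesgue (ball x2 r2)) powr (l1 / (real DIM('a) - l2))"
proof -
  define w1 where "w1 = wmeas w (ball x1 r1)"
  define w2 where "w2 = wmeas w (ball x2 r2)"
  define om where "om = unit_ball_vol (real DIM('a))"
  have om: "om > 0" unfolding om_def by simp
  have R: "0 \<le> (Kb * 2 powr rr) * (measure lebesgue (ball x1 r1) / measure lebesgue (ball x2 r2)) powr (l1 / (real DIM('a) - l2))"
    using Kb_pos by simp
  show ?thesis
  proof (cases "w1 = 0 \<or> w2 = 0")
    case True
    then show ?thesis using R unfolding w1_def[symmetric] w2_def[symmetric] by auto
  next
    case False
    then have w1p: "w1 > 0" and w2p: "w2 > 0" using wmeas_nonneg unfolding w1_def w2_def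
      by (metis order_neq_le_trans)+
    define M2 where "M2 = om * r2 powr real DIM('a)"
    have M2: "M2 > 0" unfolding M2_def using om r2 by simp
    have emB2: "emeasure lebesgue (ball x2 r2) = ennreal M2"
      unfolding M2_def om_def using r2 by (simp add: vol_ball powr_realpow del: emeasure_completion)
    have Z: "emeasure lebesgue (ball x2 r2 \<inter> {y. w y = 0}) = 0"
      using zero_set[OF r2] w2p unfolding w2_def by (metis not_gr_zero order_less_irrefl)
    have Zn: "ball x2 r2 \<inter> {y. w y = 0} \<in> null_sets lebesgue" using Z lev by (auto intro: sets.Int)
    have "ball x2 r2 = (ball x2 r2 \<inter> {y. 0 < w y}) \<union> (ball x2 r2 \<inter> {y. w y = 0})"
      using w_nonneg by (auto simp: order_le_less)
    then have "emeasure lebesgue (ball x2 r2 \<inter> {y. 0 < w y}) = ennreal M2"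
      using emeasure_Un_null_set[OF _ Zn, of "ball x2 r2 \<inter> {y. 0 < w y}"] lev emB2 by (auto intro: sets.Int)
    moreover have "(SUP m. emeasure lebesgue (Es x2 r2 m)) = emeasure lebesgue (\<Union>m. Es x2 r2 m)"
      using Es_sets Es_inc by (intro SUP_emeasure_incseq) auto
    ultimately have sup: "(SUP m. emeasure lebesgue (Es x2 r2 m)) = ennreal M2" unfolding Es_Un by simp
    have "ennreal (M2 / 2) < ennreal M2" using M2 by (simp add: ennreal_less_iff)
    then obtain m where m: "ennreal (M2 / 2) < emeasure lebesgue (Es x2 r2 m)"
      unfolding sup[symmetric] less_SUP_iff by auto
    define E where "E = Es x2 r2 m"
    define v where "v = enn2real (\<integral>\<^sup>+ y. ennreal (w y powr (-sg)) * indicator E y \<partial>lebesgue)"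
    have vdef: "(\<integral>\<^sup>+ y. ennreal (w y powr (-sg)) * indicator E y \<partial>lebesgue) = ennreal v"
      unfolding v_def E_def using Vm_fin by simp
    have Em: "E \<in> sets lebesgue" unfolding E_def by (rule Es_sets)
    have Epos: "\<And>y. y \<in> E \<Longrightarrow> w y > 0" unfolding E_def
      using Es_w by (meson less_le_trans of_nat_0_less_iff zero_less_Suc zero_less_divide_1_iff)
    have vp: "v > 0"
    proof (rule ccontr)
      assume "\<not> v > 0"
      then have "v = 0" unfolding v_def using enn2real_nonneg by (metis order_neq_le_trans)
      then have "(\<integral>\<^sup>+ y. ennreal (w y powr (-sg)) * indicator E y \<partial>lebesgue) = 0" using vdef by simp
      then have "AE y in lebesgue. ennreal (w y powr (-sg)) * indicator E y = 0"
        using Em by (subst (asm) nn_integral_0_iff_AE) auto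
      then have "AE y in lebesgue. y \<notin> E"
      proof (rule AE_mp[OF _ AE_I2], intro impI)
        fix y assume "ennreal (w y powr (-sg)) * indicator E y = 0"
        then show "y \<notin> E" using Epos[of y] by (auto simp: indicator_def)
      qed
      then have "emeasure lebesgue E = 0" using AE_iff_measurable[OF Em, of "\<lambda>y. y \<notin> E"] by simp
      then show False using m unfolding E_def by simp
    qed
    have iu: "(\<integral>\<^sup>+ y. ennreal (w y) * indicator E y \<partial>lebesgue) \<le> ennreal w2"
    proof -
      have "(\<integral>\<^sup>+ y. ennreal (w y) * indicator E y \<partial>lebesgue) \<le> (\<integral>\<^sup>+ y\<in>ball x2 r2. ennreal (w y) \<partial>lebesgue)"
        using Es_sub[of x2 r2 m] unfolding E_def by (intro nn_integral_mono) (auto simp: indicator_def)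
      then show ?thesis unfolding w2_def ball_w .
    qed
    have mE: "emeasure lebesgue E \<le> ennreal M2"
      unfolding emB2[symmetric] E_def using Es_sub by (intro emeasure_mono) auto
    have hd: "(\<integral>\<^sup>+ y. ennreal (w y powr (1/rr) * (w y powr (-sg)) powr (1 - 1/rr)) * indicator E y \<partial>lebesgue)
        \<le> ennreal (w2 powr (1/rr) * v powr (1 - 1/rr) * M2 powr 0)"
      using rr_gt1 by (intro hold3[OF Em w_meas _ Epos _ _ _ _ _ w2p vp M2 iu _ mE]) (auto simp: vdef dest: Epos)
    have "(\<integral>\<^sup>+ y. ennreal (w y powr (1/rr) * (w y powr (-sg)) powr (1 - 1/rr)) * indicator E y \<partial>lebesgue)
        = (\<integral>\<^sup>+ y. indicator E y \<partial>lebesgue)"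
    proof (intro nn_integral_cong)
      fix y show "ennreal (w y powr (1/rr) * (w y powr (-sg)) powr (1 - 1/rr)) * indicator E y = indicator E y"
      proof (cases "y \<in> E")
        case True
        then have wy: "w y > 0" by (rule Epos)
        have "w y powr (1/rr) * (w y powr (-sg)) powr (1 - 1/rr) = w y powr (1/rr) * w y powr (-sg * (1 - 1/rr))"
          by (simp add: powr_powr)
        also have "\<dots> = w y powr (1/rr - sg * (1 - 1/rr))" by (simp add: powr_add[symmetric])
        also have "\<dots> = 1" using exp_id2 wy by simp
        finally show ?thesis using True by simp
      qed simp
    qed
    also have "\<dots> = emeasure lebesgue E" using Em by simp
    finally have "emeasure lebesgue E \<le> ennreal (w2 powr (1/rr) * v powr (1 - 1/rr))" using hd M2 by simp
    then have "ennreal (M2 / 2) < ennreal (w2 powr (1/rr) * v powr (1 - 1/rr))" using m unfolding E_def by simp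
    then have "M2 / 2 < w2 powr (1/rr) * v powr (1 - 1/rr)" using ennreal_less_iff M2 by (metis ennreal_leI not_le)
    then have hh0: "M2 / 2 \<le> w2 powr (1/rr) * v powr (1 - 1/rr)" by simp
    have h0: "(w1 / phi_w l1 l2 w x1 r1) powr (1/p) *
      ((unit_ball_vol (real DIM('a)) powr (l1 / real DIM('a)) * v powr ((real DIM('a) - l1 - l2) / real DIM('a))) powr (-1/p) * v)
      \<le> C * (unit_ball_vol (real DIM('a)) * r2 ^ DIM('a))"
      unfolding w1_def by (rule core[OF r2 r1 sub w1p[unfolded w1_def] Em[unfolded E_def] Es_sub _ Es_w vp vdef[unfolded E_def]]) simp
    have h: "(w1 / (r1 powr l1 * w1 powr (l2 / real DIM('a)))) powr (1/p) *
      ((om powr (l1 / real DIM('a)) * v powr ((real DIM('a) - l1 - l2) / real DIM('a))) powr (-1/p) * v)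
      \<le> C * (om * r2 powr real DIM('a))"
      using h0 unfolding phi_eq[OF w1p[unfolded w1_def]] powr_realpow[OF r2] w1_def[symmetric] om_def .
    have hh: "om * r2 powr real DIM('a) / 2 \<le> w2 powr (1 / ((real DIM('a) * p + l1) / (real DIM('a) - l2))) * v powr (1 - 1 / ((real DIM('a) * p + l1) / (real DIM('a) - l2)))"
      using hh0 unfolding M2_def rr_def .
    have "w1 / w2 \<le> (C powr (real DIM('a) * p / (real DIM('a) - l2)) * om powr (real DIM('a) * p / (real DIM('a) - l2) + (real DIM('a) * p / (real DIM('a) - l2)) * (l1/real DIM('a)) / p - (real DIM('a) * p + l1) / (real DIM('a) - l2))
      * 2 powr ((real DIM('a) * p + l1) / (real DIM('a) - l2))) * ((om * r1 powr real DIM('a)) / (om * r2 powr real DIM('a))) powr (l1 / (real DIM('a) - l2))"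
      by (rule alg_a[OF _ p1 l1 l2 l12n l12 w1p w2p r1 r2 vp om _ h hh]) (use C1 in auto)
    then show ?thesis unfolding w1_def w2_def Kb_def rr_def om_def measure_ball'[OF r1] measure_ball'[OF r2] .
  qed
qed

end

theorem proposition8p2:
  fixes w :: "'a::euclidean_space \<Rightarrow> real" and p l1 l2 :: real
  assumes "1 \<le> p"
    and "0 \<le> l1" and "l1 < real DIM('a)"
    and "0 \<le> l2" and "l2 < real DIM('a)"
    and "0 < l1 + l2" and "l1 + l2 < real DIM('a)"
    and "is_weight w"
    and "A_morrey p (phi_w l1 l2 w) w"
  shows "RD (l1 / (real DIM('a) - l2)) w \<and>
         muckenhoupt ((real DIM('a) * p + l1) / (real DIM('a) - l2)) w"
proof -
  obtain C0 where C0: "\<forall>x r. r > 0 \<longrightarrow> morrey_norm p (phi_w l1 l2 w) w (indicator (ball x r))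
        * kothe_norm (morrey_norm p (phi_w l1 l2 w) w) (indicator (ball x r))
      \<le> ennreal C0 * emeasure lebesgue (ball x r)"
    using assms(9) unfolding A_morrey_def by blast
  define C where "C = max C0 1"
  have H: "morrey_norm p (phi_w l1 l2 w) w (indicator (ball x r))
        * kothe_norm (morrey_norm p (phi_w l1 l2 w) w) (indicator (ball x r))
      \<le> ennreal C * emeasure lebesgue (ball x r)" if "r > 0" for x :: 'a and r
  proof -
    have "ennreal C0 \<le> ennreal C" unfolding C_def by (intro ennreal_leI) simp
    then have "ennreal C0 * emeasure lebesgue (ball x r) \<le> ennreal C * emeasure lebesgue (ball x r)"
      by (rule mult_right_mono) simp
    then show ?thesis using C0 that by (meson order_trans)
  qed
  interpret msetting w p l1 l2 C
    by (unfold_locales) (use assms H in \<open>auto simp: C_def\<close>)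
  have "RD (l1 / (real DIM('a) - l2)) w"
    unfolding RD_def
  proof (intro exI allI impI)
    fix x1 r1 x2 r2 assume "0 < (r1::real)" "0 < (r2::real)" "ball (x1::'a) r1 \<subseteq> ball x2 r2"
    then show "wmeas w (ball x1 r1) / wmeas w (ball x2 r2)
        \<le> (Kb * 2 powr rr) * (measure lebesgue (ball x1 r1) / measure lebesgue (ball x2 r2)) powr (l1 / (real DIM('a) - l2))"
      by (rule rd_ball)
  qed
  moreover have "muckenhoupt ((real DIM('a) * p + l1) / (real DIM('a) - l2)) w"
    unfolding muckenhoupt_def
  proof (intro exI allI impI)
    fix x :: 'a and s :: real assume "s > 0"
    then show "(\<integral>\<^sup>+ y \<in> ball x s. ennreal (w y) \<partial>lebesgue) / emeasure lebesgue (ball x s)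
      * enn_rpow ((\<integral>\<^sup>+ y \<in> ball x s.
            (if w y = 0 then top else ennreal (w y powr (1 - ((real DIM('a) * p + l1) / (real DIM('a) - l2)) / (((real DIM('a) * p + l1) / (real DIM('a) - l2)) - 1)))) \<partial>lebesgue)
           / emeasure lebesgue (ball x s)) (((real DIM('a) * p + l1) / (real DIM('a) - l2)) - 1)
      \<le> ennreal Kb"
      using muck_ball unfolding rr_def by blast
  qed
  ultimately show ?thesis by blast
qed

end
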